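(* For any values of $k$, $\mu$, and for $\lambda\neq0$, \[ \,_{2}\tilde{F}_{3}\left(\tfrac{1}{2},\tfrac{1}{2};\lambda+1,1-\mu,\mu+1;-k^{2}\right) =\sum_{L=0}^{\infty}\frac{(-1)^{2L}k^{4L}2^{2L+2\lambda+1}(2L+\lambda)\Gamma\left(L+\frac{1}{2}\right)\Gamma\left(\lambda+\frac{1}{2}\right)\left(\left(\lambda+\frac{1}{2}\right)_{2L}\right)^{2}\Gamma(2L+\lambda+1)^{2}\Gamma(2L+2\lambda)}{\pi\,\Gamma(L+1)\Gamma(4L+2\lambda+1)^{2}} \,_{1}\tilde{F}_{2}\left(L+\tfrac{1}{2};2L+\lambda+1,L-\mu+1;-\tfrac{k^{2}}{4}\right)\,_{1}\tilde{F}_{2}\left(L+\tfrac{1}{2};2L+\lambda+1,L+\mu+1;-\tfrac{k^{2}}{4}\right). \]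
   Context: $\,_{p}F_{q}(a_1,\dots,a_p;b_1,\dots,b_q;z)=\sum_{n\ge0}\frac{(a_1)_n\cdots(a_p)_n}{(b_1)_n\cdots(b_q)_n}\frac{z^n}{n!}$ is the generalized hypergeometric function, with $(c)_n=\Gamma(c+n)/\Gamma(c)$ the Pochhammer symbol. The regularized hypergeometric function is $\,_{p}\tilde{F}_{q}(a_1,\dots,a_p;b_1,\dots,b_q;z)=\,_{p}F_{q}(a_1,\dots,a_p;b_1,\dots,b_q;z)/(\Gamma(b_1)\cdots\Gamma(b_q))$ (understood by continuity, as an entire function of the $b_j$, when some $b_j$ is a nonpositive integer). *)

theory Defs
  imports "HOL-Analysis.Analysis"
begin

text \<open>Regularized generalized hypergeometric function
  pFq~(as; bs; z) = sum_n prod_i (a_i)_n * prod_j 1/Gamma(b_j+n) * z^n / n!,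
  using the entire reciprocal Gamma function rGamma, which gives the
  continuous extension at nonpositive integer b_j.\<close>
definition hyperpFq_reg :: "complex list \<Rightarrow> complex list \<Rightarrow> complex \<Rightarrow> complex" where
  "hyperpFq_reg as bs z =
     (\<Sum>n. (\<Prod>a\<leftarrow>as. pochhammer a n) * (\<Prod>b\<leftarrow>bs. rGamma (b + of_nat n))
            * z ^ n / of_nat (fact n))"

end

theory Submission
  imports Defs "HOL-Computational_Algebra.Formal_Power_Series"
begin

definition ffp :: "nat \<Rightarrow> nat \<Rightarrow> complex" where
  "ffp p L = (\<Prod>t<L. (of_nat p - of_nat t))"

lemma ffp_Suc: "ffp p (Suc L) = ffp p L * (of_nat p - of_nat L)"
  by (simp add: ffp_def)

lemma ffp_zero: "L > p \<Longrightarrow> ffp p L = 0"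
  unfolding ffp_def by (rule prod_zero) (auto intro: bexI[of _ p])

lemma ffp_shift: "ffp (Suc p) L * (of_nat p + 1 - of_nat L) = (of_nat p + 1) * ffp p L"
proof (induction L)
  case 0 then show ?case by (simp add: ffp_def)
next
  case (Suc L)
  have "ffp (Suc p) (Suc L) * (of_nat p + 1 - of_nat (Suc L)) =
        (ffp (Suc p) L * (of_nat p + 1 - of_nat L)) * (of_nat p - of_nat L)"
    by (simp add: ffp_Suc algebra_simps)
  also have "\<dots> = (of_nat p + 1) * ffp p (Suc L)" using Suc by (simp add: ffp_Suc)
  finally show ?case .
qed

lemma ffp_fact: "L \<le> p \<Longrightarrow> ffp p L = fact p / fact (p - L)"
proof (induction L)
  case 0 then show ?case by (simp add: ffp_def)
next
  case (Suc L)
  then have "L < p" by simp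
  then obtain m where m: "p - L = Suc m" by (metis Suc_diff_Suc)
  have pm: "p - Suc L = m" using m by simp
  have "ffp p (Suc L) = fact p / fact (Suc m) * (of_nat p - of_nat L)"
    using Suc by (simp add: ffp_Suc m)
  also have "of_nat p - of_nat L = (of_nat (Suc m) :: complex)"
    using m \<open>L < p\<close> by (metis less_imp_le of_nat_diff)
  also have "fact p / fact (Suc m) * (of_nat (Suc m)::complex) = fact p / fact m"
    by (simp add: fact_Suc field_simps del: of_nat_Suc)
  finally show ?case by (simp add: pm)
qed

lemma aux_div1: "(D::complex) \<noteq> 0 \<Longrightarrow> c1 * (x * B) - c2 * (E * B / D) = B / D * (c1 * x * D - c2 * E)"
  by (simp add: field_simps)

lemma half_poch_nz: "pochhammer (1/2::complex) n \<noteq> 0"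
proof -
  have "(1/2::complex) \<noteq> - of_nat k" for k
  proof
    assume eq: "(1/2::complex) = - of_nat k"
    have "(1/2::real) = - real k" using arg_cong[OF eq, of Re] by simp
    then show False by linarith
  qed
  then show ?thesis by (auto simp: pochhammer_eq_0_iff)
qed

context
  fixes a :: complex and q :: nat
  assumes a: "a \<notin> \<int>\<^sub>\<le>\<^sub>0"
begin

lemma poch_a_nz: "pochhammer a n \<noteq> 0"
  using a by (auto simp: pochhammer_eq_0_iff)

lemma a_plus_nz: "a + of_nat n \<noteq> 0"
proof
  assume "a + of_nat n = 0"
  then have "a = - of_nat n" by (simp add: eq_neg_iff_add_eq_0)
  with a show False by auto
qed

definition gK :: "nat \<Rightarrow> nat \<Rightarrow> complex" where
  "gK p L = pochhammer a L * pochhammer (a + 1/2) L * ffp p L * ffp q L /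
     (fact L * pochhammer (1/2) L * pochhammer a (L + p + 1) * pochhammer a (L + q + 1))"

definition fK :: "nat \<Rightarrow> nat \<Rightarrow> complex" where
  "fK p L = (a + 2 * of_nat L) * gK p L"

definition rK :: "nat \<Rightarrow> complex" where
  "rK p = pochhammer (1/2) (p + q) / (pochhammer (1/2) p * pochhammer (1/2) q * pochhammer a (p + q + 1))"

definition GK :: "nat \<Rightarrow> nat \<Rightarrow> complex" where
  "GK p L = - (1/2) * of_nat L * (2 * of_nat L - 1) * (a + of_nat L + of_nat q)
       * (a + of_nat L + of_nat p + 1) * gK (Suc p) L / (of_nat p + 1)"

lemma gK_shift: "gK p L * (of_nat p + 1) = gK (Suc p) L * (of_nat p + 1 - of_nat L) * (a + of_nat L + of_nat p + 1)"
proof -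
  define N where "N = pochhammer a L * pochhammer (a + 1/2) L * ffp q L"
  define D where "D = fact L * pochhammer (1/2) L * pochhammer a (L + q + 1)"
  define P where "P = pochhammer a (L + p + 1)"
  define c where "c = a + of_nat L + of_nat p + 1"
  have D0: "D \<noteq> 0" unfolding D_def using half_poch_nz poch_a_nz by simp
  have P0: "P \<noteq> 0" unfolding P_def using poch_a_nz by simp
  have c0: "c \<noteq> 0" unfolding c_def using a_plus_nz[of "L + p + 1"] by (simp add: add_ac)
  have n1: "pochhammer a (L + Suc p + 1) = P * c"
    by (simp add: P_def c_def pochhammer_rec' algebra_simps)
  have g0: "gK p L = N * ffp p L / (D * P)" unfolding gK_def N_def D_def P_def by (simp add: field_simps)
  have g1: "gK (Suc p) L = N * ffp (Suc p) L / (D * (P * c))" unfolding gK_def N_def D_def n1[symmetric] by (simp add: field_simps)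
  show ?thesis unfolding g0 g1 c_def[symmetric] using D0 P0 c0 ffp_shift[of p L]
    by (simp add: field_simps)
qed

lemma gK_Suc: "gK p' (Suc L) = gK p' L * ((a + of_nat L) * (a + 1/2 + of_nat L) * (of_nat p' - of_nat L) * (of_nat q - of_nat L))
        / ((of_nat L + 1) * (1/2 + of_nat L) * (a + of_nat L + of_nat p' + 1) * (a + of_nat L + of_nat q + 1))"
proof -
  define N where "N = pochhammer a L * pochhammer (a + 1/2) L * ffp p' L * ffp q L"
  define D where "D = fact L * pochhammer (1/2) L * pochhammer a (L + p' + 1) * pochhammer a (L + q + 1)"
  define X where "X = (a + of_nat L) * (a + 1/2 + of_nat L) * (of_nat p' - of_nat L) * (of_nat q - of_nat L)"
  define Y where "Y = (of_nat L + 1) * (1/2 + of_nat L) * (a + of_nat L + of_nat p' + 1) * (a + of_nat L + of_nat q + 1)"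
  have d2: "(1/2 + of_nat L :: complex) \<noteq> 0"
  proof
    assume eq: "(1/2 + of_nat L :: complex) = 0"
    have "(1/2 + real L) = 0" using arg_cong[OF eq, of Re] by simp
    then show False by linarith
  qed
  have D0: "D \<noteq> 0" unfolding D_def using half_poch_nz poch_a_nz by simp
  have Y0: "Y \<noteq> 0" unfolding Y_def using d2 a_plus_nz[of "L + p' + 1"] a_plus_nz[of "L + q + 1"]
    by (simp add: add_ac) (metis of_nat_Suc of_nat_eq_0_iff add.commute nat.distinct(1))
  have g0: "gK p' L = N / D" unfolding gK_def N_def D_def ..
  have g1: "gK p' (Suc L) = (N * X) / (D * Y)"
  proof -
    have p1: "pochhammer a (Suc L) = pochhammer a L * (a + of_nat L)" by (simp add: pochhammer_Suc)
    have p2: "pochhammer (a + 1/2) (Suc L) = pochhammer (a + 1/2) L * (a + 1/2 + of_nat L)" by (simp add: pochhammer_Suc)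
    have p5: "(fact (Suc L) :: complex) = fact L * (of_nat L + 1)" by (simp add: algebra_simps)
    have p6: "pochhammer (1/2::complex) (Suc L) = pochhammer (1/2) L * (1/2 + of_nat L)" by (simp add: pochhammer_Suc)
    have p7: "pochhammer a (Suc L + p' + 1) = pochhammer a (L + p' + 1) * (a + of_nat L + of_nat p' + 1)"
      by (simp add: pochhammer_Suc add_ac)
    have p8: "pochhammer a (Suc L + q + 1) = pochhammer a (L + q + 1) * (a + of_nat L + of_nat q + 1)"
      by (simp add: pochhammer_Suc add_ac)
    show ?thesis unfolding gK_def p1 p2 p5 p6 p7 p8 ffp_Suc N_def D_def X_def Y_def
      by (simp add: mult_ac)
  qed
  show ?thesis unfolding g0 g1 X_def[symmetric] Y_def[symmetric] mult.assoc[symmetric] using D0 Y0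
    by simp
qed

lemma WZ_step:
  "(of_nat p + 1/2) * (a + of_nat p + of_nat q + 1) * fK (Suc p) L
     - (of_nat p + of_nat q + 1/2) * fK p L = GK p (Suc L) - GK p L"
proof -
  define B where "B = gK (Suc p) L"
  have n1: "pochhammer a (L + Suc p + 1) = pochhammer a (L + p + 1) * (a + of_nat L + of_nat p + 1)"
    by (simp add: pochhammer_rec' algebra_simps)
  have h1: "fK p L = (a + 2 * of_nat L) * (of_nat p + 1 - of_nat L) * (a + of_nat L + of_nat p + 1) * B / (of_nat p + 1)"
  proof -
    have p0: "(of_nat p + 1 :: complex) \<noteq> 0" by (metis of_nat_Suc of_nat_eq_0_iff add.commute nat.distinct(1))
    have "gK p L = B * (of_nat p + 1 - of_nat L) * (a + of_nat L + of_nat p + 1) / (of_nat p + 1)"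
      using gK_shift[of p L] p0 unfolding B_def by (simp add: field_simps)
    then show ?thesis unfolding fK_def by simp
  qed
  have h2: "gK (Suc p) (Suc L) = B * ((a + of_nat L) * (a + 1/2 + of_nat L) * (of_nat p + 1 - of_nat L) * (of_nat q - of_nat L))
        / ((of_nat L + 1) * (1/2 + of_nat L) * (a + of_nat L + of_nat p + 2) * (a + of_nat L + of_nat q + 1))"
    using gK_Suc[of "Suc p" L] unfolding B_def by (simp add: add_ac)
  have d1: "(of_nat L + 1 :: complex) \<noteq> 0" by (metis of_nat_Suc of_nat_eq_0_iff add.commute nat.distinct(1))
  have d2: "(1/2 + of_nat L :: complex) \<noteq> 0"
  proof
    assume eq: "(1/2 + of_nat L :: complex) = 0"
    have "(1/2 + real L) = 0" using arg_cong[OF eq, of Re] by simp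
    then show False by linarith
  qed
  have d3: "a + of_nat L + of_nat p + 2 \<noteq> 0" using a_plus_nz[of "L + p + 2"] by (simp add: add_ac)
  have d4: "a + of_nat L + of_nat q + 1 \<noteq> 0" using a_plus_nz[of "L + q + 1"] by (simp add: add_ac)
  have p0: "(of_nat p + 1 :: complex) \<noteq> 0" by (metis of_nat_Suc of_nat_eq_0_iff add.commute nat.distinct(1))
  have G1a: "GK p (Suc L) = (-(1/2) * (of_nat L+1) * (2*(of_nat L + 1) - 1)) * ((a + of_nat L + of_nat p + 2) * (a + of_nat L + of_nat q + 1)) * gK (Suc p) (Suc L) / (of_nat p + 1)"
    unfolding GK_def of_nat_Suc by (simp only: divide_inverse) algebra
  have e1: "-(1/2) * (of_nat L+1) * (2*(of_nat L + 1) - 1) = - ((of_nat L + 1) * (1/2 + of_nat L) :: complex)"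
    by (simp add: algebra_simps)
  define X where "X = (a + of_nat L) * (a + 1/2 + of_nat L) * (of_nat p + 1 - of_nat L) * (of_nat q - of_nat L)"
  define Y1 where "Y1 = (of_nat L + 1) * (1/2 + of_nat L :: complex)"
  define Y2 where "Y2 = (a + of_nat L + of_nat p + 2) * (a + of_nat L + of_nat q + 1)"
  have Y10: "Y1 \<noteq> 0" unfolding Y1_def using d1 d2 by simp
  have Y20: "Y2 \<noteq> 0" unfolding Y2_def using d3 d4 by simp
  have h2': "gK (Suc p) (Suc L) = B * X / (Y1 * Y2)" unfolding h2 X_def Y1_def Y2_def by (simp add: mult.assoc)
  have G1: "GK p (Suc L) = - X * B / (of_nat p + 1)"
    unfolding G1a e1 h2' Y1_def[symmetric] Y2_def[symmetric] using Y10 Y20 by (simp add: field_simps)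
  have G0: "GK p L = - (1/2) * of_nat L * (2 * of_nat L - 1) * (a + of_nat L + of_nat q)
       * (a + of_nat L + of_nat p + 1) * B / (of_nat p + 1)" unfolding GK_def B_def by simp
  have F1: "fK (Suc p) L = (a + 2 * of_nat L) * B" unfolding fK_def B_def by simp
  have poly: "(of_nat p + 1/2) * (a + of_nat p + of_nat q + 1) * (a + 2 * of_nat L) * (of_nat p + 1)
     - (of_nat p + of_nat q + 1/2) * ((a + 2 * of_nat L) * (of_nat p + 1 - of_nat L) * (a + of_nat L + of_nat p + 1))
     = - X + (1/2) * of_nat L * (2 * of_nat L - 1) * (a + of_nat L + of_nat q) * (a + of_nat L + of_nat p + 1)"
    unfolding X_def by (simp add: field_simps)
  have "(of_nat p + 1/2) * (a + of_nat p + of_nat q + 1) * fK (Suc p) L - (of_nat p + of_nat q + 1/2) * fK p L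
     = B / (of_nat p + 1) * ((of_nat p + 1/2) * (a + of_nat p + of_nat q + 1) * (a + 2 * of_nat L) * (of_nat p + 1)
     - (of_nat p + of_nat q + 1/2) * ((a + 2 * of_nat L) * (of_nat p + 1 - of_nat L) * (a + of_nat L + of_nat p + 1)))"
    unfolding F1 h1 using p0 by (rule aux_div1)
  also have "\<dots> = GK p (Suc L) - GK p L"
    unfolding poly G1 G0 by (simp only: divide_inverse) algebra
  finally show ?thesis .
qed


lemma K_sum: "(\<Sum>L\<le>q. fK p L) = rK p"
proof (induction p)
  case 0
  have "(\<Sum>L\<le>q. fK 0 L) = (\<Sum>L\<in>{0}. fK 0 L)"
  proof (rule sum.mono_neutral_right)
    show "\<forall>i\<in>{..q} - {0}. fK 0 i = 0"
    proof
      fix i assume "i \<in> {..q} - {0}"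
      then have "ffp 0 i = 0" by (intro ffp_zero) auto
      then show "fK 0 i = 0" unfolding fK_def gK_def by simp
    qed
  qed auto
  also have "\<dots> = rK 0"
  proof -
    have "fK 0 0 = a * (1 / (pochhammer a 1 * pochhammer a (q + 1)))"
      unfolding fK_def gK_def by (simp add: ffp_def)
    also have "\<dots> = 1 / pochhammer a (q + 1)" using a_plus_nz[of 0] by simp
    also have "\<dots> = rK 0" unfolding rK_def using half_poch_nz[of q] by simp
    finally show ?thesis by simp
  qed
  finally show ?case .
next
  case (Suc p)
  have "(\<Sum>L\<le>q. (of_nat p + 1/2) * (a + of_nat p + of_nat q + 1) * fK (Suc p) L
     - (of_nat p + of_nat q + 1/2) * fK p L) = (\<Sum>L<Suc q. GK p (Suc L) - GK p L)"
    by (simp only: WZ_step lessThan_Suc_atMost)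
  also have "\<dots> = GK p (Suc q) - GK p 0" by (rule sum_lessThan_telescope)
  also have "\<dots> = 0"
  proof -
    have "gK (Suc p) (Suc q) = 0" unfolding gK_def by (simp add: ffp_zero)
    then show ?thesis unfolding GK_def by simp
  qed
  finally have "(of_nat p + 1/2) * (a + of_nat p + of_nat q + 1) * (\<Sum>L\<le>q. fK (Suc p) L)
      - (of_nat p + of_nat q + 1/2) * (\<Sum>L\<le>q. fK p L) = 0"
    by (simp only: sum_subtractf sum_distrib_left)
  then have eq1: "(of_nat p + 1/2) * (a + of_nat p + of_nat q + 1) * (\<Sum>L\<le>q. fK (Suc p) L)
      = (of_nat p + of_nat q + 1/2) * rK p"
    using Suc by simp
  have nz: "(of_nat p + 1/2) * (a + of_nat p + of_nat q + 1) \<noteq> 0"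
  proof -
    have "(of_nat p + 1/2 :: complex) \<noteq> 0"
    proof
      assume eq: "(of_nat p + 1/2 :: complex) = 0"
      have "(real p + 1/2) = 0" using arg_cong[OF eq, of Re] by simp
      then show False by linarith
    qed
    moreover have "a + of_nat p + of_nat q + 1 \<noteq> 0" using a_plus_nz[of "p + q + 1"] by (simp add: add_ac)
    ultimately show ?thesis by simp
  qed
  have eq2: "(of_nat p + of_nat q + 1/2) * rK p = (of_nat p + 1/2) * (a + of_nat p + of_nat q + 1) * rK (Suc p)"
  proof -
    define N where "N = pochhammer (1/2::complex) (p + q)"
    define D where "D = pochhammer (1/2::complex) p * pochhammer (1/2) q * pochhammer a (p + q + 1)"
    have D0: "D \<noteq> 0" unfolding D_def using half_poch_nz poch_a_nz by simp
    have r0: "rK p = N / D" unfolding rK_def N_def D_def ..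
    have r1: "rK (Suc p) = (N * (of_nat p + of_nat q + 1/2)) / (D * ((of_nat p + 1/2) * (a + of_nat p + of_nat q + 1)))"
    proof -
      have e1: "pochhammer (1/2::complex) (Suc p + q) = N * (of_nat p + of_nat q + 1/2)"
        by (simp add: N_def pochhammer_Suc add_ac)
      have e2: "pochhammer (1/2::complex) (Suc p) = pochhammer (1/2) p * (of_nat p + 1/2)"
        by (simp add: pochhammer_Suc add_ac)
      have e3: "pochhammer a (Suc p + q + 1) = pochhammer a (p + q + 1) * (a + of_nat p + of_nat q + 1)"
        by (simp add: pochhammer_Suc add_ac)
      show ?thesis unfolding rK_def e1 e2 e3 D_def by (simp add: mult_ac)
    qed
    show ?thesis unfolding r0 r1 using D0 nz by simp
  qed
  show ?case using eq1 eq2 nz by simp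
qed


end

definition E2 :: "complex \<Rightarrow> complex" where "E2 w = exp (w * of_real (ln 2))"

lemma E2_add: "E2 (v + w) = E2 v * E2 w" by (simp add: E2_def exp_add ring_distribs)
lemma E2_nat: "E2 (of_nat n) = 2 ^ n"
proof -
  have "E2 (of_nat n) = exp (of_real (ln 2)) ^ n" unfolding E2_def by (simp add: exp_of_nat_mult [symmetric])
  also have "exp (of_real (ln 2) :: complex) = 2"
    by (metis exp_ln exp_of_real of_real_numeral zero_less_numeral)
  finally show ?thesis by simp
qed
lemma E2_nz: "E2 w \<noteq> 0" by (simp add: E2_def)
lemma powr2_E2: "(2::complex) powr w = E2 w"
proof -
  have "Ln (2::complex) = of_real (ln 2)" using Ln_of_real[of 2] by simp
  then show ?thesis by (simp add: powr_def E2_def mult.commute)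
qed

lemma nonpos_half:
  fixes lam :: complex
  assumes "2 * lam \<notin> \<int>\<^sub>\<le>\<^sub>0"
  shows "lam \<notin> \<int>\<^sub>\<le>\<^sub>0" "lam + 1/2 \<notin> \<int>\<^sub>\<le>\<^sub>0"
    "\<And>n. lam + of_nat n \<notin> \<int>\<^sub>\<le>\<^sub>0" "\<And>n. lam + 1/2 + of_nat n \<notin> \<int>\<^sub>\<le>\<^sub>0"
    "\<And>n. 2 * lam + of_nat n \<notin> \<int>\<^sub>\<le>\<^sub>0"
proof -
  have key: "2 * lam \<noteq> - of_nat m" for m
  proof
    assume "2 * lam = - of_nat m"
    then have "2 * lam \<in> \<int>\<^sub>\<le>\<^sub>0" by simp
    with assms show False by simp
  qed
  show "2 * lam + of_nat n \<notin> \<int>\<^sub>\<le>\<^sub>0" for n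
  proof
    assume "2 * lam + of_nat n \<in> \<int>\<^sub>\<le>\<^sub>0"
    then obtain m where "2 * lam + of_nat n = - of_nat m" by (auto elim!: nonpos_Ints_cases')
    then have "2 * lam = - of_nat (m + n)" by (simp add: algebra_simps)
    with key show False by blast
  qed
  show "lam + of_nat n \<notin> \<int>\<^sub>\<le>\<^sub>0" for n
  proof
    assume "lam + of_nat n \<in> \<int>\<^sub>\<le>\<^sub>0"
    then obtain m where h: "lam + of_nat n = - of_nat m" by (auto elim!: nonpos_Ints_cases')
    have "2 * lam = 2 * (lam + of_nat n) - 2 * of_nat n" by (simp add: algebra_simps)
    also have "\<dots> = - of_nat (2 * m + 2 * n)" unfolding h by simp
    finally have "2 * lam = - of_nat (2 * m + 2 * n)" .
    with key show False by blast
  qed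
  show "lam + 1/2 + of_nat n \<notin> \<int>\<^sub>\<le>\<^sub>0" for n
  proof
    assume "lam + 1/2 + of_nat n \<in> \<int>\<^sub>\<le>\<^sub>0"
    then obtain m where h: "lam + 1/2 + of_nat n = - of_nat m" by (auto elim!: nonpos_Ints_cases')
    have "2 * lam = 2 * (lam + 1/2 + of_nat n) - 2 * of_nat n - 1" by (simp add: algebra_simps)
    also have "\<dots> = - of_nat (2 * m + 2 * n + 1)" unfolding h by simp
    finally have "2 * lam = - of_nat (2 * m + 2 * n + 1)" .
    with key show False by blast
  qed
  from this[of 0] show "lam + 1/2 \<notin> \<int>\<^sub>\<le>\<^sub>0" by simp
  from \<open>\<And>n. lam + of_nat n \<notin> \<int>\<^sub>\<le>\<^sub>0\<close>[of 0] show "lam \<notin> \<int>\<^sub>\<le>\<^sub>0" by simp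
qed

lemma alg_coef:
  fixes x0 x1 x2 x3 x4 x5 x6 x7 x8 x9 x10 x11 x12 x13 x14 x15 x16 x17 x18 x19 x20 :: complex
  assumes h1: "x3*x4 = x10" and h2: "x10*x5 = x11*x12*x9" and h3: "x13*x3 = x14*x12*x15" and h4: "x6 = x15*x16*x17*x18"
    and h5: "x2 = x12*x19" and h6: "x12*x12 = x7" and h7: "x0*x11*x11 = x14*x20"
    and nz: "x3 \<noteq> 0" "x9 \<noteq> 0" "x14 \<noteq> 0" "x12 \<noteq> 0" "x8 \<noteq> 0" "x11 \<noteq> 0" "x10 \<noteq> 0"
  shows "x0 * x1 * x2 * x3 * x4^2 * x5^2 * x6 / (x7 * x8 * x9^2) = x20 * x16 * x13 * x1 * x17 * x18 * x19 / x8"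
proof -
  have x4: "x4 = x10 / x3" using h1 nz by (simp add: field_simps)
  have x5: "x5 = x11*x12*x9 / x10" using h2 nz by (simp add: field_simps)
  have x15: "x15 = x13*x3/(x14*x12)" using h3 nz by (simp add: field_simps)
  have x0: "x0 = x14*x20/(x11*x11)" using h7 nz by (simp add: field_simps)
  show ?thesis unfolding x4 x5 h4 x15 h5 h6[symmetric] x0 using nz
    by (simp add: field_simps power2_eq_square)
qed

definition cc :: "complex \<Rightarrow> nat \<Rightarrow> complex" where
  "cc lam L = (1/16)^L * Gamma lam * (2 * of_nat L + lam) * pochhammer lam L * pochhammer (lam + 1/2) L
     * pochhammer (1/2) L / fact L"

lemma coef_core:
  fixes lam :: complex
  assumes lam: "2 * lam \<notin> \<int>\<^sub>\<le>\<^sub>0"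
  shows "2 powr (of_nat (2*L) + 2*lam + 1)
           * (of_nat (2*L) + lam) * Gamma (of_nat L + 1/2) * Gamma (lam + 1/2)
           * (pochhammer (lam + 1/2) (2*L))\<^sup>2 * (Gamma (of_nat (2*L) + lam + 1))\<^sup>2
           * Gamma (of_nat (2*L) + 2*lam)
           / (of_real pi * Gamma (of_nat L + 1) * (Gamma (of_nat (4*L) + 2*lam + 1))\<^sup>2) = cc lam L"
proof -
  note nh = nonpos_half[OF lam]
  define z where "z = of_nat (2*L) + lam + 1/2"
  have z1: "z \<notin> \<int>\<^sub>\<le>\<^sub>0" unfolding z_def using nh(4)[of "2*L"] by (simp add: add_ac)
  have z2: "z + 1/2 \<notin> \<int>\<^sub>\<le>\<^sub>0" unfolding z_def using nh(3)[of "2*L+1"] by (simp add: add_ac)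
  have zz: "z + 1/2 = of_nat (2*L) + lam + 1" unfolding z_def by simp
  have z2z: "2 * z = of_nat (4*L) + 2*lam + 1" unfolding z_def by simp
  have h1: "Gamma (lam + 1/2) * pochhammer (lam + 1/2) (2*L) = Gamma z"
    using pochhammer_Gamma[OF nh(2), of "2*L"] Gamma_nonzero[OF nh(2)] unfolding z_def by (simp add: add_ac)
  have h2: "Gamma z * Gamma (of_nat (2*L) + lam + 1) = E2 (1 - 2*z) * of_real (sqrt pi) * Gamma (of_nat (4*L) + 2*lam + 1)"
    using Gamma_legendre_duplication[OF z1 z2] unfolding zz z2z E2_def .
  have h3: "Gamma lam * Gamma (lam + 1/2) = E2 (1 - 2*lam) * of_real (sqrt pi) * Gamma (2*lam)"
    using Gamma_legendre_duplication[OF nh(1,2)] unfolding E2_def .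
  have h4: "Gamma (of_nat (2*L) + 2*lam) = Gamma (2*lam) * of_nat (2^(2*L)) * pochhammer lam L * pochhammer (lam + 1/2) L"
    using pochhammer_Gamma[OF lam, of "2*L"] Gamma_nonzero[OF lam] pochhammer_double[of lam L]
    by (simp add: field_simps add_ac)
  have h5: "Gamma (of_nat L + 1/2) = of_real (sqrt pi) * pochhammer (1/2::complex) L"
  proof -
    have "(1/2::complex) \<notin> \<int>\<^sub>\<le>\<^sub>0"
    proof
      assume "(1/2::complex) \<in> \<int>\<^sub>\<le>\<^sub>0"
      then obtain n where eq: "(1/2::complex) = - of_nat n" by (auto elim!: nonpos_Ints_cases')
      have "(1/2::real) = - real n" using arg_cong[OF eq, of Re] by simp
      then show False by linarith
    qed
    then show ?thesis using pochhammer_Gamma[of "1/2::complex" L] Gamma_one_half_complex Gamma_nonzero[of "1/2::complex"]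
      by (simp add: field_simps add_ac)
  qed
  have h6: "of_real (sqrt pi) * of_real (sqrt pi) = (of_real pi :: complex)"
  proof -
    have "sqrt pi * sqrt pi = pi" using pi_ge_zero by simp
    then show ?thesis by (metis of_real_mult)
  qed
  have h7: "E2 (of_nat (2*L) + 2*lam + 1) * E2 (1 - 2*z) * E2 (1 - 2*z) = E2 (1 - 2*lam) * (1/64)^L"
  proof -
    have ex: "of_nat (2*L) + 2*lam + 1 + (1 - 2*z) + (1 - 2*z) = (1 - 2*lam) + (- of_nat (6*L))"
      unfolding z_def by (simp add: algebra_simps)
    have "E2 (of_nat (2*L) + 2*lam + 1) * E2 (1 - 2*z) * E2 (1 - 2*z) = E2 ((1 - 2*lam) + (- of_nat (6*L)))"
      by (simp only: ex[symmetric] E2_add)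
    also have "\<dots> = E2 (1 - 2*lam) * (1/64)^L"
    proof -
      have "E2 (- of_nat (6*L)) * E2 (of_nat (6*L)) = 1" by (simp add: E2_def exp_add[symmetric] ring_distribs)
      then have "E2 (- of_nat (6*L)) = 1 / 2^(6*L)" unfolding E2_nat by (simp add: field_simps)
      then show ?thesis unfolding E2_add by (simp add: power_mult power_divide)
    qed
    finally show ?thesis .
  qed
  have F: "Gamma (of_nat L + 1) = fact L" using Gamma_fact[of L] by (simp add: add_ac)
  have nz: "Gamma (lam + 1/2) \<noteq> 0" "Gamma (of_nat (4*L) + 2*lam + 1) \<noteq> 0" "E2 (1 - 2*lam) \<noteq> 0"
     "of_real (sqrt pi) \<noteq> (0::complex)" "(fact L :: complex) \<noteq> 0" "E2 (1 - 2*z) \<noteq> 0" "Gamma z \<noteq> 0"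
    using Gamma_nonzero[OF nh(2)] Gamma_nonzero[OF z1] E2_nz Gamma_nonzero[OF nh(5)[of "4*L+1"]]
    by (auto simp: add_ac)
  have "2 powr (of_nat (2*L) + 2*lam + 1)
           * (of_nat (2*L) + lam) * Gamma (of_nat L + 1/2) * Gamma (lam + 1/2)
           * (pochhammer (lam + 1/2) (2*L))\<^sup>2 * (Gamma (of_nat (2*L) + lam + 1))\<^sup>2
           * Gamma (of_nat (2*L) + 2*lam)
           / (of_real pi * Gamma (of_nat L + 1) * (Gamma (of_nat (4*L) + 2*lam + 1))\<^sup>2)
     = (1/64)^L * of_nat (2^(2*L)) * Gamma lam * (of_nat (2*L) + lam) * pochhammer lam L * pochhammer (lam + 1/2) L
         * pochhammer (1/2) L / fact L"
    unfolding powr2_E2 F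
    by (rule alg_coef[OF h1 h2 h3 h4 h5 h6 h7 nz(1,2,3,4,5,6,7)])
  also have "\<dots> = cc lam L"
  proof -
    have "(1/64::complex)^L * of_nat (2^(2*L)) = (1/16)^L"
    proof -
      have "(of_nat (2^(2*L)) :: complex) = 4^L" by (simp add: power_mult)
      then have "(1/64::complex)^L * of_nat (2^(2*L)) = (1/64 * 4)^L" by (simp only: power_mult_distrib)
      then show ?thesis by simp
    qed
    then show ?thesis unfolding cc_def by simp
  qed
  finally show ?thesis .
qed

lemma rGamma_bound:
  fixes b :: complex
  shows "\<exists>C\<ge>0. \<forall>n. norm (rGamma (b + of_nat n)) \<le> C * 2^n / fact n"
proof -
  define N where "N = nat (ceiling (2 * norm b)) + 1"
  define C where "C = Max ((\<lambda>n. norm (rGamma (b + of_nat n)) * fact n / 2^n) ` {..N})"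
  have C0: "C \<ge> 0" unfolding C_def
  proof (rule order.trans[OF _ Max_ge[of _ "norm (rGamma (b + of_nat 0)) * fact 0 / 2^0"]])
    show "norm (rGamma (b + of_nat 0)) * fact 0 / 2^0 \<in> (\<lambda>n. norm (rGamma (b + of_nat n)) * fact n / 2^n) ` {..N}"
      by (rule imageI) simp
  qed auto
  have small: "norm (rGamma (b + of_nat n)) \<le> C * 2^n / fact n" if "n \<le> N" for n
  proof -
    have "norm (rGamma (b + of_nat n)) * fact n / 2^n \<le> C"
      unfolding C_def by (rule Max_ge) (use that in auto)
    then show ?thesis by (simp add: field_simps)
  qed
  have "norm (rGamma (b + of_nat n)) \<le> C * 2^n / fact n" for n
  proof (induction n)
    case 0 then show ?case using small[of 0] by simp
  next
    case (Suc m)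
    show ?case
    proof (cases "Suc m \<le> N")
      case True then show ?thesis using small by blast
    next
      case False
      then have mN: "m \<ge> N" by simp
      have "real m \<ge> 2 * norm b + 1"
      proof -
        have "real N \<ge> 2 * norm b + 1" unfolding N_def by linarith
        then show ?thesis using mN by (meson le_trans of_nat_le_iff order_trans)
      qed
      then have big: "norm (b + of_nat m) \<ge> (real m + 1) / 2"
      proof -
        have "norm (of_nat m :: complex) \<le> norm (b + of_nat m) + norm b"
          using norm_triangle_ineq4[of "b + of_nat m" b] by simp
        then have "real m \<le> norm (b + of_nat m) + norm b" by simp
        with \<open>real m \<ge> 2 * norm b + 1\<close> show ?thesis by argo
      qed
      have pos: "(real m + 1) / 2 > 0" by simp
      have eq: "norm (rGamma (b + of_nat m)) = norm (b + of_nat m) * norm (rGamma (b + of_nat (Suc m)))"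
      proof -
        have "rGamma (b + of_nat m) = (b + of_nat m) * rGamma (b + of_nat (Suc m))"
          using rGamma_plus1[of "b + of_nat m"] by (simp add: add_ac)
        then show ?thesis by (simp add: norm_mult)
      qed
      have "(real m + 1) / 2 * norm (rGamma (b + of_nat (Suc m))) \<le> norm (rGamma (b + of_nat m))"
        unfolding eq by (rule mult_right_mono[OF big norm_ge_zero])
      also have "\<dots> \<le> C * 2^m / fact m" by (rule Suc.IH)
      finally have H: "(real m + 1) / 2 * norm (rGamma (b + of_nat (Suc m))) \<le> C * 2^m / fact m" .
      have "norm (rGamma (b + of_nat (Suc m))) \<le> C * 2^m / fact m / ((real m + 1) / 2)"
        using H pos by (simp only: pos_le_divide_eq mult.commute)
      also have "\<dots> = C * 2^Suc m / fact (Suc m)" by (simp add: field_simps)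
      finally show ?thesis .
    qed
  qed
  with C0 show ?thesis by blast
qed

lemma norm_pochhammer_le: "norm (pochhammer (z::complex) n) \<le> (norm z + 1)^n * fact n"
proof (induction n)
  case 0 then show ?case by simp
next
  case (Suc n)
  have "norm (z + of_nat n) \<le> norm z + real n" using norm_triangle_ineq[of z "of_nat n"] by simp
  also have "\<dots> \<le> (norm z + 1) * (real n + 1)" by (simp add: algebra_simps)
  finally have a: "norm (z + of_nat n) \<le> (norm z + 1) * (real n + 1)" .
  have "norm (pochhammer z (Suc n)) = norm (pochhammer z n) * norm (z + of_nat n)"
    by (simp add: pochhammer_Suc norm_mult)
  also have "\<dots> \<le> ((norm z + 1)^n * fact n) * ((norm z + 1) * (real n + 1))"
    by (rule mult_mono[OF Suc.IH a]) auto
  also have "\<dots> = (norm z + 1)^Suc n * fact (Suc n)" by (simp add: algebra_simps)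
  finally show ?case .
qed

lemma norm_pochhammer_half: "norm (pochhammer (of_nat L + 1/2 :: complex) i) \<le> fact (L + i) / fact L"
proof (induction i)
  case 0 then show ?case by simp
next
  case (Suc i)
  have a: "norm (of_nat L + 1/2 + of_nat i :: complex) \<le> real (L + i) + 1"
  proof -
    have "(of_nat L + 1/2 + of_nat i :: complex) = of_real (real L + 1/2 + real i)" by simp
    then have "norm (of_nat L + 1/2 + of_nat i :: complex) = real L + 1/2 + real i"
      by (simp only: norm_of_real)
    then show ?thesis by simp
  qed
  have "norm (pochhammer (of_nat L + 1/2 :: complex) (Suc i)) = norm (pochhammer (of_nat L + 1/2 :: complex) i) * norm (of_nat L + 1/2 + of_nat i :: complex)"
    by (simp add: pochhammer_Suc norm_mult)
  also have "\<dots> \<le> (fact (L + i) / fact L) * (real (L + i) + 1)"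
    by (rule mult_mono[OF Suc.IH a]) auto
  also have "\<dots> = fact (L + Suc i) / fact L" by (simp add: algebra_simps)
  finally show ?case .
qed

lemma three_pow: "2 * real L + 1 \<le> 3 ^ L"
proof (induction L)
  case 0 then show ?case by simp
next
  case (Suc L)
  have "(1::real) \<le> 3 ^ L" by simp
  with Suc show ?case by simp
qed

definition h12 :: "complex \<Rightarrow> complex \<Rightarrow> complex \<Rightarrow> complex \<Rightarrow> nat \<Rightarrow> complex" where
  "h12 A B1 B2 z n = pochhammer A n * (rGamma (B1 + of_nat n) * rGamma (B2 + of_nat n)) * z ^ n / fact n"

lemma h12_bound:
  fixes lam nu u :: complex
  shows "\<exists>M\<ge>0. \<forall>L i. norm (h12 (of_nat L + 1/2) (of_nat (2*L) + lam + 1) (of_nat L + nu + 1) u i)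
            \<le> M * 8^L * (4 * norm u)^i / (fact L * fact L * fact i)"
proof -
  obtain C1 where C1: "C1 \<ge> 0" "\<And>n. norm (rGamma ((lam + 1) + of_nat n)) \<le> C1 * 2^n / fact n"
    using rGamma_bound[of "lam + 1"] by blast
  obtain C2 where C2: "C2 \<ge> 0" "\<And>n. norm (rGamma ((nu + 1) + of_nat n)) \<le> C2 * 2^n / fact n"
    using rGamma_bound[of "nu + 1"] by blast
  have "norm (h12 (of_nat L + 1/2) (of_nat (2*L) + lam + 1) (of_nat L + nu + 1) u i)
            \<le> (C1 * C2) * 8^L * (4 * norm u)^i / (fact L * fact L * fact i)" for L i
  proof -
    have a1: "norm (pochhammer (of_nat L + 1/2 :: complex) i) \<le> fact (L + i) / fact L"
      by (rule norm_pochhammer_half)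
    have a2: "norm (rGamma (of_nat (2*L) + lam + 1 + of_nat i)) \<le> C1 * 2^(2*L+i) / fact (2*L+i)"
      using C1(2)[of "2*L+i"] by (simp add: add_ac)
    have a3: "norm (rGamma (of_nat L + nu + 1 + of_nat i)) \<le> C2 * 2^(L+i) / fact (L+i)"
      using C2(2)[of "L+i"] by (simp add: add_ac)
    have "norm (h12 (of_nat L + 1/2) (of_nat (2*L) + lam + 1) (of_nat L + nu + 1) u i)
       = norm (pochhammer (of_nat L + 1/2 :: complex) i) * (norm (rGamma (of_nat (2*L) + lam + 1 + of_nat i))
          * norm (rGamma (of_nat L + nu + 1 + of_nat i))) * (norm u ^ i / fact i)"
      unfolding h12_def by (simp add: norm_mult norm_divide norm_power)
    also have "\<dots> \<le> (fact (L + i) / fact L) * ((C1 * 2^(2*L+i) / fact (2*L+i)) * (C2 * 2^(L+i) / fact (L+i)))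
          * (norm u ^ i / fact i)"
      by (intro mult_mono a1 a2 a3 mult_nonneg_nonneg) (auto simp: C1 C2)
    also have "\<dots> = (C1 * C2 * 8^L * (4 * norm u)^i) / (fact L * fact (2*L+i) * fact i)"
    proof -
      have "(2::real)^(2*L+i) * 2^(L+i) = 2^((2*L+i)+(L+i))" by (rule power_add[symmetric])
      also have "(2*L+i)+(L+i) = 3*L + 2*i" by simp
      also have "(2::real)^(3*L + 2*i) = (2^3)^L * (2^2)^i" by (simp add: power_add power_mult)
      finally have "(2::real)^(2*L+i) * 2^(L+i) = 8^L * 4^i" by simp
      then show ?thesis by (simp add: field_simps power_mult_distrib)
    qed
    also have "\<dots> \<le> (C1 * C2 * 8^L * (4 * norm u)^i) / (fact L * fact L * fact i)"
    proof (rule divide_left_mono)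
      have "(fact L :: real) \<le> fact (2*L+i)" by (rule fact_mono) simp
      then show "fact L * fact L * fact i \<le> (fact L * fact (2*L+i) * fact i :: real)"
        by (intro mult_right_mono mult_left_mono) auto
    qed (auto simp: C1 C2)
    finally show ?thesis .
  qed
  moreover have "C1 * C2 \<ge> 0" using C1 C2 by simp
  ultimately show ?thesis by blast
qed

lemma alg_bound:
  fixes x G a b c t f :: real
  assumes "f \<noteq> 0"
  shows "x^L * G * (a * t^L) * (a^L * f) * (b^L * f) * (c^L * f) / f = (G * a) * (x * t * a * b * c)^L * (f * f)"
  using assms by (simp add: power_mult_distrib field_simps)

lemma cc_bound:
  fixes lam :: complex
  shows "\<exists>K\<ge>0. \<exists>E\<ge>0. \<forall>L. norm (cc lam L) \<le> K * E^L * (fact L * fact L)"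
proof -
  define K where "K = norm (Gamma lam) * (norm lam + 1)"
  define E where "E = (1/16) * 3 * (norm lam + 1) * (norm (lam + 1/2) + 1) * (norm (1/2::complex) + 1)"
  have "norm (cc lam L) \<le> K * E^L * (fact L * fact L)" for L
  proof -
    have b1: "norm (2 * of_nat L + lam) \<le> (norm lam + 1) * 3^L"
    proof -
      have "norm (2 * of_nat L + lam) \<le> norm (2 * of_nat L :: complex) + norm lam" by (rule norm_triangle_ineq)
      also have "norm (2 * of_nat L :: complex) = 2 * real L" by simp
      also have "2 * real L + norm lam \<le> (norm lam + 1) * (2 * real L + 1)" by (simp add: algebra_simps)
      also have "\<dots> \<le> (norm lam + 1) * 3^L" by (intro mult_left_mono three_pow) auto
      finally show ?thesis by simp
    qed
    have "norm (cc lam L) = (1/16)^L * norm (Gamma lam) * norm (2 * of_nat L + lam) * norm (pochhammer lam L)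
         * norm (pochhammer (lam + 1/2) L) * norm (pochhammer (1/2::complex) L) / fact L"
      unfolding cc_def by (simp add: norm_mult norm_divide norm_power)
    also have "\<dots> \<le> (1/16)^L * norm (Gamma lam) * ((norm lam + 1) * 3^L) * ((norm lam + 1)^L * fact L)
         * ((norm (lam + 1/2) + 1)^L * fact L) * ((norm (1/2::complex) + 1)^L * fact L) / fact L"
      by (intro divide_right_mono mult_mono b1 norm_pochhammer_le mult_nonneg_nonneg) auto
    also have "\<dots> = K * E^L * (fact L * fact L)"
      unfolding K_def E_def by (rule alg_bound) simp
    finally show ?thesis .
  qed
  moreover have "K \<ge> 0" "E \<ge> 0" unfolding K_def E_def by auto
  ultimately show ?thesis by blast
qed

lemma exp_has_sum:
  fixes Q :: real
  assumes "Q \<ge> 0"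
  shows "((\<lambda>n. Q^n / fact n) has_sum exp Q) UNIV"
proof -
  have s: "(\<lambda>n. Q^n / fact n) sums exp Q" using exp_converges[of Q] by (simp add: divide_inverse_commute)
  have "summable (\<lambda>n. norm (Q^n / fact n))" using s assms by (simp add: sums_iff)
  then show ?thesis using s by (rule norm_summable_imp_has_sum)
qed

lemma has_sum_prod_real:
  fixes f g :: "_ \<Rightarrow> real"
  assumes f: "(f has_sum F) A" and g: "(g has_sum G) B" and f0: "\<And>x. f x \<ge> 0" and g0: "\<And>y. g y \<ge> 0"
  shows "((\<lambda>(x,y). f x * g y) has_sum (F*G)) (A \<times> B)"
proof -
  have inner: "((\<lambda>y. (\<lambda>(x,y). f x * g y) (x, y)) has_sum f x * G) B" if "x \<in> A" for x
    using has_sum_cmult_right[OF g, of "f x"] by simp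
  have outer: "((\<lambda>x. f x * G) has_sum F * G) A" using has_sum_cmult_left[OF f] .
  have summ: "(\<lambda>(x,y). f x * g y) summable_on Sigma A (\<lambda>_. B)"
    by (rule summable_on_SigmaI[OF inner]) (use outer f0 g0 in \<open>auto simp: summable_on_def\<close>)
  show ?thesis using has_sum_SigmaI[OF inner outer summ] by simp
qed

lemma has_sum_prod_complex:
  fixes f g :: "_ \<Rightarrow> complex"
  assumes f: "(f has_sum F) A" and g: "(g has_sum G) B"
    and fa: "(\<lambda>x. norm (f x)) summable_on A" and ga: "(\<lambda>y. norm (g y)) summable_on B"
  shows "((\<lambda>(x,y). f x * g y) has_sum (F*G)) (A \<times> B)"
proof -
  have inner: "((\<lambda>y. (\<lambda>(x,y). f x * g y) (x, y)) has_sum f x * G) B" if "x \<in> A" for x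
    using has_sum_cmult_right[OF g, of "f x"] by simp
  have outer: "((\<lambda>x. f x * G) has_sum F * G) A" using has_sum_cmult_left[OF f] .
  have "((\<lambda>(x,y). norm (f x) * norm (g y)) has_sum (infsum (\<lambda>x. norm (f x)) A * infsum (\<lambda>y. norm (g y)) B)) (A \<times> B)"
    by (rule has_sum_prod_real) (use fa ga in auto)
  then have "(\<lambda>(x,y). norm (f x) * norm (g y)) summable_on (A \<times> B)" by (auto simp: summable_on_def)
  then have "(\<lambda>z. norm ((\<lambda>(x,y). f x * g y) z)) summable_on (A \<times> B)"
    by (rule summable_on_cong[THEN iffD1, rotated]) (auto simp: norm_mult)
  then have summ: "(\<lambda>(x,y). f x * g y) summable_on Sigma A (\<lambda>_. B)"
    using abs_summable_summable by blast
  show ?thesis using has_sum_SigmaI[OF inner outer summ] by simp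
qed

lemma h12_norm_summable: "summable (\<lambda>n. norm (h12 A B1 B2 z n))"
proof -
  obtain C1 where C1: "C1 \<ge> 0" "\<And>n. norm (rGamma (B1 + of_nat n)) \<le> C1 * 2^n / fact n"
    using rGamma_bound[of B1] by blast
  obtain C2 where C2: "C2 \<ge> 0" "\<And>n. norm (rGamma (B2 + of_nat n)) \<le> C2 * 2^n / fact n"
    using rGamma_bound[of B2] by blast
  define x where "x = (norm A + 1) * 4 * norm z"
  have sx: "summable (\<lambda>n. (C1 * C2) * (inverse (fact n) * x^n))"
    by (intro summable_mult summable_exp)
  show ?thesis
  proof (rule summable_comparison_test'[OF sx])
    fix n :: nat
    have "norm (norm (h12 A B1 B2 z n)) = norm (pochhammer A n) * (norm (rGamma (B1 + of_nat n)) * norm (rGamma (B2 + of_nat n)))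
        * (norm z ^ n / fact n)"
      unfolding h12_def by (simp add: norm_mult norm_divide norm_power)
    also have "\<dots> \<le> ((norm A + 1)^n * fact n) * ((C1 * 2^n / fact n) * (C2 * 2^n / fact n)) * (norm z ^ n / fact n)"
      by (intro mult_mono norm_pochhammer_le C1 C2 mult_nonneg_nonneg) (auto simp: C1 C2)
    also have "\<dots> = (C1 * C2) * (inverse (fact n) * x^n) / fact n"
    proof -
      have "(2::real)^n * 2^n = 4^n" by (simp flip: power_mult_distrib)
      moreover have "x^n = (norm A + 1)^n * 4^n * norm z^n" unfolding x_def by (simp only: power_mult_distrib)
      ultimately show ?thesis by (simp add: field_simps)
    qed
    also have "\<dots> \<le> (C1 * C2) * (inverse (fact n) * x^n)"
    proof -
      have "0 \<le> (C1 * C2) * (inverse (fact n) * x^n)" using C1 C2 unfolding x_def by simp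
      moreover have "(1::real) \<le> fact n" by simp
      ultimately show ?thesis by (simp add: divide_le_eq mult_le_cancel_left1 mult_le_cancel_left2 mult_left_mono)
    qed
    finally show "norm (norm (h12 A B1 B2 z n)) \<le> (C1 * C2) * (inverse (fact n) * x^n)" .
  qed
qed

lemma h12_has_sum: "(h12 A B1 B2 z has_sum suminf (h12 A B1 B2 z)) UNIV"
  using h12_norm_summable norm_summable_imp_has_sum summable_norm_cancel summable_sums by blast

lemma h12_abs: "(\<lambda>n. norm (h12 A B1 B2 z n)) summable_on UNIV"
  using norm_summable_imp_summable_on[of "\<lambda>n. norm (h12 A B1 B2 z n)"] h12_norm_summable by simp

lemma hyper12: "hyperpFq_reg [A] [B1, B2] z = suminf (h12 A B1 B2 z)"
proof -
  have "h12 A B1 B2 z = (\<lambda>n. pochhammer A n * (rGamma (B1 + of_nat n) * rGamma (B2 + of_nat n)) * z ^ n / fact n)"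
    by (rule ext) (simp add: h12_def)
  then show ?thesis by (simp add: hyperpFq_reg_def)
qed

lemma VAND_r:
  fixes mu :: complex
  shows "(\<Sum>p\<le>n. rGamma (1 - mu + of_nat p) * rGamma (1 + mu + of_nat (n - p)) / (fact p * fact (n - p)))
     = 4^n * pochhammer (1/2) n * rGamma (1 - mu + of_nat n) * rGamma (1 + mu + of_nat n) / fact n"
proof -
  have t: "rGamma (1 - mu + of_nat p) * rGamma (1 + mu + of_nat (n - p)) / (fact p * fact (n - p))
     = rGamma (1 - mu + of_nat n) * rGamma (1 + mu + of_nat n) * (((of_nat n + mu) gchoose p) * ((of_nat n - mu) gchoose (n - p)))"
    if "p \<le> n" for p
  proof -
    have r1: "rGamma (1 - mu + of_nat p) = pochhammer (1 - mu + of_nat p) (n - p) * rGamma (1 - mu + of_nat n)"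
    proof -
      have e: "1 - mu + of_nat p + of_nat (n - p) = 1 - mu + of_nat n" using that by (simp add: of_nat_diff)
      show ?thesis using pochhammer_rGamma[of "1 - mu + of_nat p" "n - p"] unfolding e .
    qed
    have r2: "rGamma (1 + mu + of_nat (n - p)) = pochhammer (1 + mu + of_nat (n - p)) p * rGamma (1 + mu + of_nat n)"
    proof -
      have e: "1 + mu + of_nat (n - p) + of_nat p = 1 + mu + of_nat n" using that by (simp add: of_nat_diff)
      show ?thesis using pochhammer_rGamma[of "1 + mu + of_nat (n - p)" p] unfolding e .
    qed
    have g1: "(of_nat n - mu) gchoose (n - p) = pochhammer (1 - mu + of_nat p) (n - p) / fact (n - p)"
      unfolding gbinomial_pochhammer' using that by (simp add: of_nat_diff algebra_simps)
    have g2: "(of_nat n + mu) gchoose p = pochhammer (1 + mu + of_nat (n - p)) p / fact p"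
      unfolding gbinomial_pochhammer' using that by (simp add: of_nat_diff algebra_simps)
    show ?thesis unfolding r1 r2 g1 g2 by (simp add: field_simps)
  qed
  have "(\<Sum>p\<le>n. rGamma (1 - mu + of_nat p) * rGamma (1 + mu + of_nat (n - p)) / (fact p * fact (n - p)))
      = rGamma (1 - mu + of_nat n) * rGamma (1 + mu + of_nat n) * (\<Sum>p\<le>n. ((of_nat n + mu) gchoose p) * ((of_nat n - mu) gchoose (n - p)))"
    unfolding sum_distrib_left by (rule sum.cong[OF refl], rule t) simp
  also have "(\<Sum>p\<le>n. ((of_nat n + mu) gchoose p) * ((of_nat n - mu) gchoose (n - p))) = (of_nat n + mu + (of_nat n - mu)) gchoose n"
    using gbinomial_Vandermonde[of "of_nat n + mu" "of_nat n - mu" n] by (simp add: atLeast0AtMost)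
  also have "of_nat n + mu + (of_nat n - mu) = of_nat (2 * n)" by simp
  also have "(of_nat (2 * n) :: complex) gchoose n = of_nat ((2 * n) choose n)" by (simp add: binomial_gbinomial)
  also have "(of_nat ((2 * n) choose n) :: complex) = 4^n * pochhammer (1/2) n / fact n"
  proof -
    have "(of_nat ((2 * n) choose n) :: complex) = fact (2 * n) / (fact n * fact n)"
      by (simp add: binomial_fact)
    also have "(fact (2 * n) :: complex) = 2 ^ (2 * n) * pochhammer (1 / 2) n * fact n" by (rule fact_double)
    finally show ?thesis by (simp add: power_mult)
  qed
  finally show ?thesis by (simp add: field_simps)
qed

lemma alg_key:
  fixes G R w pl pl2 ph fL Hp Hq Pp Pq Fp Fq fp fq :: complex
  assumes "G * R = 1" "ph \<noteq> 0" "Pp \<noteq> 0" "Pq \<noteq> 0" "fp \<noteq> 0" "fq \<noteq> 0" "Fp \<noteq> 0" "Fq \<noteq> 0" "fL \<noteq> 0"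
  shows "(G * w * pl * pl2 * ph / fL) * ((Hp / ph) * (Hq / ph)) * ((R / Pp) * (R / Pq)) / ((Fp / fp) * (Fq / fq))
    = (R * Hp * Hq / (Fp * Fq)) * (w * (pl * pl2 * fp * fq / (fL * ph * Pp * Pq)))"
proof -
  have G: "G \<noteq> 0" using assms(1) by auto
  have R: "R = 1 / G" using assms(1) G by (simp add: eq_divide_eq mult.commute)
  show ?thesis unfolding R using assms(2-) G by (simp add: field_simps power2_eq_square)
qed

lemma KEY_r:
  fixes lam :: complex
  assumes lam: "lam \<notin> \<int>\<^sub>\<le>\<^sub>0"
  shows "(\<Sum>L\<le>min p q. (cc lam L * 16^L) * (pochhammer (of_nat L + 1/2) (p - L) * pochhammer (of_nat L + 1/2) (q - L))
            * (rGamma (lam + 1 + of_nat (L + p)) * rGamma (lam + 1 + of_nat (L + q))) / (fact (p - L) * fact (q - L)))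
     = pochhammer (1/2) (p + q) * rGamma (lam + 1 + of_nat (p + q)) / (fact p * fact q)"
proof -
  define co where "co = rGamma lam * pochhammer (1/2) p * pochhammer (1/2) q / (fact p * fact q)"
  have GR: "Gamma lam * rGamma lam = 1" using Gamma_nonzero[OF lam] by (simp add: rGamma_inverse_Gamma)
  have e1: "pochhammer (of_nat L + 1/2) (n - L) = pochhammer (1/2) n / (pochhammer (1/2) L :: complex)" if "L \<le> n" for L n :: nat
  proof -
    have "pochhammer (1/2::complex) (L + (n - L)) = pochhammer (1/2) L * pochhammer (1/2 + of_nat L) (n - L)"
      by (rule pochhammer_product')
    then show ?thesis using that half_poch_nz[of L] by (simp add: field_simps add_ac)
  qed
  have e2: "rGamma (lam + 1 + of_nat (L + n)) = rGamma lam / pochhammer lam (L + n + 1)" for L n :: nat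
  proof -
    have "rGamma lam = pochhammer lam (L + n + 1) * rGamma (lam + of_nat (L + n + 1))" by (rule pochhammer_rGamma)
    then show ?thesis using poch_a_nz[OF lam, of "L + n + 1"] by (simp add: field_simps add_ac)
  qed
  have ffnz: "ffp n L \<noteq> 0" if "L \<le> n" for L n :: nat
    using ffp_fact[OF that] by simp
  have e3: "(fact (n - L) :: complex) = fact n / ffp n L" if "L \<le> n" for L n :: nat
    using ffp_fact[OF that] ffnz[OF that] by (simp add: field_simps)
  have e4: "cc lam L * 16^L = Gamma lam * (2 * of_nat L + lam) * pochhammer lam L * pochhammer (lam + 1/2) L
     * pochhammer (1/2) L / fact L" for L
  proof -
    have "(1/16::complex)^L * 16^L = 1" by (simp add: power_mult_distrib[symmetric])
    then show ?thesis unfolding cc_def by (simp add: field_simps)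
  qed
  have trm: "(cc lam L * 16^L) * (pochhammer (of_nat L + 1/2) (p - L) * pochhammer (of_nat L + 1/2) (q - L))
            * (rGamma (lam + 1 + of_nat (L + p)) * rGamma (lam + 1 + of_nat (L + q))) / (fact (p - L) * fact (q - L))
       = co * fK lam q p L" if "L \<le> min p q" for L
  proof -
    have Lp: "L \<le> p" and Lq: "L \<le> q" using that by auto
    have "(cc lam L * 16^L) * (pochhammer (of_nat L + 1/2) (p - L) * pochhammer (of_nat L + 1/2) (q - L))
            * (rGamma (lam + 1 + of_nat (L + p)) * rGamma (lam + 1 + of_nat (L + q))) / (fact (p - L) * fact (q - L))
       = (rGamma lam * pochhammer (1/2) p * pochhammer (1/2) q / (fact p * fact q)) *
         ((2 * of_nat L + lam) * (pochhammer lam L * pochhammer (lam + 1/2) L * ffp p L * ffp q L /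
           (fact L * pochhammer (1/2) L * pochhammer lam (L + p + 1) * pochhammer lam (L + q + 1))))"
      unfolding e4 e1[OF Lp] e1[OF Lq] e2 e3[OF Lp] e3[OF Lq]
      by (rule alg_key[OF GR half_poch_nz poch_a_nz[OF lam] poch_a_nz[OF lam] ffnz[OF Lp] ffnz[OF Lq]]) auto
    also have "\<dots> = co * fK lam q p L" by (simp add: co_def fK_def[OF lam] gK_def[OF lam] add_ac)
    finally show ?thesis .
  qed
  have "(\<Sum>L\<le>min p q. (cc lam L * 16^L) * (pochhammer (of_nat L + 1/2) (p - L) * pochhammer (of_nat L + 1/2) (q - L))
            * (rGamma (lam + 1 + of_nat (L + p)) * rGamma (lam + 1 + of_nat (L + q))) / (fact (p - L) * fact (q - L)))
       = (\<Sum>L\<le>min p q. co * fK lam q p L)" by (rule sum.cong[OF refl]) (rule trm, simp)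
  also have "\<dots> = co * (\<Sum>L\<le>q. fK lam q p L)"
  proof -
    have "(\<Sum>L\<le>q. fK lam q p L) = (\<Sum>L\<le>min p q. fK lam q p L)"
    proof (rule sum.mono_neutral_right)
      show "\<forall>i\<in>{..q} - {..min p q}. fK lam q p i = 0"
      proof
        fix i assume "i \<in> {..q} - {..min p q}"
        then have "ffp p i = 0" by (intro ffp_zero) auto
        then show "fK lam q p i = 0" unfolding fK_def[OF lam] gK_def[OF lam] by simp
      qed
    qed auto
    then show ?thesis by (simp add: sum_distrib_left)
  qed
  also have "\<dots> = co * rK lam q p" using K_sum[OF lam] by simp
  also have "\<dots> = pochhammer (1/2) (p + q) * rGamma (lam + 1 + of_nat (p + q)) / (fact p * fact q)"
    unfolding co_def rK_def[OF lam] 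
    using e2[of 0 "p + q"]
    using half_poch_nz[of p] half_poch_nz[of q] poch_a_nz[OF lam, of "p + q + 1"]
    by (simp add: field_simps add_ac)
  finally show ?thesis .
qed

lemma alg_tau_bound:
  fixes cL kk a b K E M1 M2 R f fi fj :: real and L i j :: nat
  assumes "0 \<le> cL" "cL \<le> K * E^L * (f * f)" "0 \<le> kk"
    "0 \<le> a" "a \<le> M1 * 8^L * R^i / (f * f * fi)" "0 \<le> b" "b \<le> M2 * 8^L * R^j / (f * f * fj)"
    "1 \<le> f" "0 < fi" "0 < fj" "0 \<le> K" "0 \<le> E" "0 \<le> M1" "0 \<le> M2" "0 \<le> R"
  shows "cL * kk^L * (a * b) \<le> (K * M1 * M2) * ((E * 64 * kk)^L / f * (R^i / fi * (R^j / fj)))"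
proof -
  have "cL * kk^L * (a * b) \<le> (K * E^L * (f * f)) * kk^L * ((M1 * 8^L * R^i / (f * f * fi)) * (M2 * 8^L * R^j / (f * f * fj)))"
    using assms by (intro mult_mono mult_nonneg_nonneg) auto
  also have "\<dots> = (K * M1 * M2) * ((E * 64 * kk)^L / (f * f) * (R^i / fi * (R^j / fj)))"
  proof -
    have "(8::real)^L * 8^L = 64^L" by (simp flip: power_mult_distrib)
    moreover have "(E * 64 * kk)^L = E^L * 64^L * kk^L" by (simp only: power_mult_distrib)
    ultimately show ?thesis using assms by (simp add: field_simps)
  qed
  also have "\<dots> \<le> (K * M1 * M2) * ((E * 64 * kk)^L / f * (R^i / fi * (R^j / fj)))"
  proof -
    have "(E * 64 * kk)^L / (f * f) \<le> (E * 64 * kk)^L / f"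
      using assms by (intro divide_left_mono) (auto intro: order.trans[of _ f] simp: mult_le_cancel_left1)
    then show ?thesis using assms by (intro mult_left_mono mult_right_mono) auto
  qed
  finally show ?thesis .
qed

lemma alg_tau_term:
  fixes c k4 uL u1 u2 U s16 P1 P2 R1 R2 R3 R4 f1 f2 :: complex
  assumes "k4 = s16 * uL" "uL * u1 * u2 = U" "f1 \<noteq> 0" "f2 \<noteq> 0"
  shows "c * k4 * ((P1 * (R1 * R2) * u1 / f1) * (P2 * (R3 * R4) * u2 / f2))
       = U * (R2 * R4) * ((c * s16) * (P1 * P2) * (R1 * R3) / (f1 * f2))"
  using assms by (simp add: field_simps)

theorem mainTheorem5:
  fixes k mu lam :: complex
  assumes "lam \<noteq> 0"
    and "2 * lam \<notin> \<int>\<^sub>\<le>\<^sub>0"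
  shows "(\<lambda>L. (-1) ^ (2*L) * k ^ (4*L) * 2 powr (of_nat (2*L) + 2*lam + 1)
           * (of_nat (2*L) + lam) * Gamma (of_nat L + 1/2) * Gamma (lam + 1/2)
           * (pochhammer (lam + 1/2) (2*L))\<^sup>2 * (Gamma (of_nat (2*L) + lam + 1))\<^sup>2
           * Gamma (of_nat (2*L) + 2*lam)
           / (of_real pi * Gamma (of_nat L + 1) * (Gamma (of_nat (4*L) + 2*lam + 1))\<^sup>2)
           * hyperpFq_reg [of_nat L + 1/2] [of_nat (2*L) + lam + 1, of_nat L - mu + 1] (- k\<^sup>2 / 4)
           * hyperpFq_reg [of_nat L + 1/2] [of_nat (2*L) + lam + 1, of_nat L + mu + 1] (- k\<^sup>2 / 4))
         sums hyperpFq_reg [1/2, 1/2] [lam + 1, 1 - mu, mu + 1] (- k\<^sup>2)"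
proof -
  note lam2 = assms(2)
  have lam: "lam \<notin> \<int>\<^sub>\<le>\<^sub>0" using nonpos_half(1)[OF lam2] .
  define u where "u = - k\<^sup>2 / 4"
  define h1 where "h1 L = h12 (of_nat L + 1/2) (of_nat (2*L) + lam + 1) (of_nat L + (-mu) + 1) u" for L
  define h2 where "h2 L = h12 (of_nat L + 1/2) (of_nat (2*L) + lam + 1) (of_nat L + mu + 1) u" for L
  define F1 where "F1 L = hyperpFq_reg [of_nat L + 1/2] [of_nat (2*L) + lam + 1, of_nat L - mu + 1] (- k\<^sup>2 / 4)" for L
  define F2 where "F2 L = hyperpFq_reg [of_nat L + 1/2] [of_nat (2*L) + lam + 1, of_nat L + mu + 1] (- k\<^sup>2 / 4)" for L
  have F1s: "(h1 L has_sum F1 L) UNIV" for L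
  proof -
    have "F1 L = suminf (h1 L)" unfolding F1_def h1_def hyper12 u_def by simp
    then show ?thesis unfolding h1_def by (simp add: h12_has_sum)
  qed
  have F2s: "(h2 L has_sum F2 L) UNIV" for L
  proof -
    have "F2 L = suminf (h2 L)" unfolding F2_def h2_def hyper12 u_def by simp
    then show ?thesis unfolding h2_def by (simp add: h12_has_sum)
  qed
  have F1a: "(\<lambda>i. norm (h1 L i)) summable_on UNIV" for L unfolding h1_def by (rule h12_abs)
  have F2a: "(\<lambda>i. norm (h2 L i)) summable_on UNIV" for L unfolding h2_def by (rule h12_abs)
  define C where "C L = cc lam L * k^(4*L)" for L
  define tau where "tau = (\<lambda>z::nat \<times> nat \<times> nat. C (fst z) * (h1 (fst z) (fst (snd z)) * h2 (fst z) (snd (snd z))))"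

  have tau_sum: "tau summable_on UNIV"
  proof -
    obtain M1 where M1: "M1 \<ge> 0" "\<And>L i. norm (h12 (of_nat L + 1/2) (of_nat (2*L) + lam + 1) (of_nat L + (-mu) + 1) u i)
            \<le> M1 * 8^L * (4 * norm u)^i / (fact L * fact L * fact i)"
      using h12_bound[of lam "-mu" u] by blast
    obtain M2 where M2: "M2 \<ge> 0" "\<And>L i. norm (h12 (of_nat L + 1/2) (of_nat (2*L) + lam + 1) (of_nat L + mu + 1) u i)
            \<le> M2 * 8^L * (4 * norm u)^i / (fact L * fact L * fact i)"
      using h12_bound[of lam "mu" u] by blast
    obtain K E where KE: "K \<ge> 0" "E \<ge> 0" "\<And>L. norm (cc lam L) \<le> K * E^L * (fact L * fact L)"
      using cc_bound[of lam] by blast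
    define Q where "Q = E * 64 * norm k ^ 4"
    define R where "R = 4 * norm u"
    have Q0: "Q \<ge> 0" and R0: "R \<ge> 0" unfolding Q_def R_def using KE by auto
    define gb where "gb z = (K * M1 * M2) * (Q^(fst z) / fact (fst z) * (R^(fst (snd z)) / fact (fst (snd z))
        * (R^(snd (snd z)) / fact (snd (snd z)))))" for z :: "nat \<times> nat \<times> nat"
    have gbs: "gb summable_on UNIV"
    proof -
      have eQ: "((\<lambda>n. Q^n / fact n) has_sum exp Q) UNIV" by (rule exp_has_sum[OF Q0])
      have eR: "((\<lambda>n. R^n / fact n) has_sum exp R) UNIV" by (rule exp_has_sum[OF R0])
      have p1: "((\<lambda>(i,j). R^i / fact i * (R^j / fact j)) has_sum (exp R * exp R)) (UNIV \<times> UNIV)"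
        by (rule has_sum_prod_real[OF eR eR]) (use R0 in auto)
      have p2: "((\<lambda>(L,ij). Q^L / fact L * (\<lambda>(i,j). R^i / fact i * (R^j / fact j)) ij) has_sum (exp Q * (exp R * exp R))) (UNIV \<times> (UNIV \<times> UNIV))"
        by (rule has_sum_prod_real[OF eQ p1]) (use Q0 R0 in auto)
      have "((\<lambda>z. Q^(fst z) / fact (fst z) * (R^(fst (snd z)) / fact (fst (snd z)) * (R^(snd (snd z)) / fact (snd (snd z)))))
            has_sum (exp Q * (exp R * exp R))) UNIV"
      proof -
        have fe: "(\<lambda>(L,ij). Q^L / fact L * (\<lambda>(i,j). R^i / fact i * (R^j / fact j)) ij)
          = (\<lambda>z. Q^(fst z) / fact (fst z) * (R^(fst (snd z)) / fact (fst (snd z)) * (R^(snd (snd z)) / fact (snd (snd z)))))"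
          by (rule ext) (simp add: case_prod_beta)
        show ?thesis using p2 unfolding fe by simp
      qed
      from has_sum_cmult_right[OF this, of "K * M1 * M2"] show ?thesis
        unfolding gb_def by (auto simp: summable_on_def)
    qed
    have bnd: "norm (tau z) \<le> gb z" if "z \<in> UNIV" for z
    proof -
      obtain L i j where z: "z = (L, i, j)" by (metis prod.collapse)
      have "norm (tau z) = norm (cc lam L) * (norm k ^ 4)^L * (norm (h1 L i) * norm (h2 L j))"
        unfolding tau_def C_def z by (simp add: norm_mult norm_power power_mult)
      also have "\<dots> \<le> (K * M1 * M2) * ((E * 64 * norm k ^ 4)^L / fact L * (R^i / fact i * (R^j / fact j)))"
        by (rule alg_tau_bound) (use KE M1 M2 R0 in \<open>auto simp: h1_def h2_def R_def\<close>)
      also have "\<dots> = gb z" unfolding gb_def z Q_def by simp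
      finally show ?thesis .
    qed
    have "(\<lambda>z. norm (tau z)) summable_on UNIV" by (rule Infinite_Sum.abs_summable_on_comparison_test'[OF gbs bnd])
    then show ?thesis by (rule abs_summable_summable)
  qed
  define T where "T = infsum tau UNIV"
  have tauT: "(tau has_sum T) UNIV" unfolding T_def using tau_sum by simp

  have RHS: "((\<lambda>L. C L * (F1 L * F2 L)) has_sum T) UNIV"
  proof -
    have inner: "((\<lambda>y. tau (L, y)) has_sum C L * (F1 L * F2 L)) UNIV" for L
    proof -
      have "((\<lambda>(x,y). h1 L x * h2 L y) has_sum (F1 L * F2 L)) (UNIV \<times> UNIV)"
        by (rule has_sum_prod_complex[OF F1s F2s F1a F2a])
      then have "((\<lambda>y. C L * ((\<lambda>(x,y). h1 L x * h2 L y) y)) has_sum C L * (F1 L * F2 L)) UNIV"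
        using has_sum_cmult_right by simp
      then show ?thesis unfolding tau_def by (simp add: case_prod_beta)
    qed
    have "(tau has_sum T) (Sigma UNIV (\<lambda>_. UNIV))" using tauT by simp
    then show ?thesis by (rule has_sum_Sigma') (rule inner)
  qed

  define Bq where "Bq p q = u^(p+q) * (rGamma (1 - mu + of_nat p) * rGamma (1 + mu + of_nat q))
      * (pochhammer (1/2) (p+q) * rGamma (lam + 1 + of_nat (p+q)) / (fact p * fact q))" for p q
  have LHS1: "((\<lambda>pq. Bq (fst pq) (snd pq)) has_sum T) UNIV"
  proof -
    define S1 where "S1 = Sigma (UNIV :: (nat \<times> nat) set) (\<lambda>pq. {..min (fst pq) (snd pq)})"
    define g1 where "g1 = (\<lambda>x::(nat \<times> nat) \<times> nat. (snd x, (fst (fst x) - snd x, snd (fst x) - snd x)))"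
    have bij1: "bij_betw g1 S1 UNIV"
      by (rule bij_betwI[where g = "\<lambda>y. ((fst y + fst (snd y), fst y + snd (snd y)), fst y)"])
         (auto simp: S1_def g1_def)
    have "((\<lambda>x. tau (g1 x)) has_sum T) S1" using has_sum_reindex_bij_betw[OF bij1, of tau T] tauT by blast
    then have A: "((\<lambda>pq. \<Sum>L\<in>{..min (fst pq) (snd pq)}. tau (g1 (pq, L))) has_sum T) UNIV"
      unfolding S1_def by (rule has_sum_Sigma') (rule has_sum_finite, simp)
    have u2: "k^(4*L) = 16^L * u^(2*L)" for L
    proof -
      have "u^2 = k^4 / 16" unfolding u_def by (simp add: power_divide flip: power_mult)
      then have "k^4 = 16 * u^2" by (simp add: mult.commute)
      then have "k^(4*L) = (16 * u^2)^L" by (simp add: power_mult)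
      then show ?thesis by (simp add: power_mult_distrib power_mult)
    qed
    have trm: "tau (g1 ((p, q), L)) = u^(p+q) * (rGamma (1 - mu + of_nat p) * rGamma (1 + mu + of_nat q))
      * ((cc lam L * 16^L) * (pochhammer (of_nat L + 1/2) (p - L) * pochhammer (of_nat L + 1/2) (q - L))
            * (rGamma (lam + 1 + of_nat (L + p)) * rGamma (lam + 1 + of_nat (L + q))) / (fact (p - L) * fact (q - L)))"
      if "L \<le> min p q" for p q L
    proof -
      have Lp: "L \<le> p" and Lq: "L \<le> q" using that by auto
      have a1: "of_nat (2*L) + lam + 1 + of_nat (p - L) = lam + 1 + of_nat (L + p)" using Lp by (simp add: of_nat_diff)
      have a2: "of_nat (2*L) + lam + 1 + of_nat (q - L) = lam + 1 + of_nat (L + q)" using Lq by (simp add: of_nat_diff)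
      have a3: "of_nat L + - mu + 1 + of_nat (p - L) = 1 - mu + of_nat p" using Lp by (simp add: of_nat_diff)
      have a4: "of_nat L + mu + 1 + of_nat (q - L) = 1 + mu + of_nat q" using Lq by (simp add: of_nat_diff)
      have uu: "u^(2*L) * u^(p - L) * u^(q - L) = u^(p+q)"
      proof -
        have "u^(2*L) * u^(p - L) * u^(q - L) = u^(2*L + (p - L) + (q - L))" by (simp add: power_add)
        also have "2*L + (p - L) + (q - L) = p + q" using Lp Lq by simp
        finally show ?thesis .
      qed
      have "tau (g1 ((p, q), L)) = cc lam L * k^(4*L) * (h1 L (p - L) * h2 L (q - L))"
        unfolding tau_def g1_def C_def by simp
      also have "\<dots> = u^(p+q) * (rGamma (1 - mu + of_nat p) * rGamma (1 + mu + of_nat q))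
      * ((cc lam L * 16^L) * (pochhammer (of_nat L + 1/2) (p - L) * pochhammer (of_nat L + 1/2) (q - L))
            * (rGamma (lam + 1 + of_nat (L + p)) * rGamma (lam + 1 + of_nat (L + q))) / (fact (p - L) * fact (q - L)))"
        unfolding h1_def h2_def h12_def a1 a2 a3 a4
        by (rule alg_tau_term[OF u2 uu]) auto
      finally show ?thesis .
    qed
    have B: "(\<Sum>L\<in>{..min p q}. tau (g1 ((p, q), L))) = Bq p q" for p q
    proof -
      have "(\<Sum>L\<in>{..min p q}. tau (g1 ((p, q), L))) = u^(p+q) * (rGamma (1 - mu + of_nat p) * rGamma (1 + mu + of_nat q))
         * (\<Sum>L\<le>min p q. (cc lam L * 16^L) * (pochhammer (of_nat L + 1/2) (p - L) * pochhammer (of_nat L + 1/2) (q - L))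
            * (rGamma (lam + 1 + of_nat (L + p)) * rGamma (lam + 1 + of_nat (L + q))) / (fact (p - L) * fact (q - L)))"
        unfolding sum_distrib_left by (rule sum.cong[OF refl], rule trm) simp
      also have "\<dots> = Bq p q" unfolding KEY_r[OF lam] Bq_def ..
      finally show ?thesis .
    qed
    show ?thesis using A unfolding B[symmetric] by (simp add: case_prod_beta)
  qed
  define h23 where "h23 n = pochhammer (1/2) n * pochhammer (1/2) n * (rGamma (lam + 1 + of_nat n)
      * (rGamma (1 - mu + of_nat n) * rGamma (mu + 1 + of_nat n))) * (- k\<^sup>2) ^ n / fact n" for n
  have LHS2: "(h23 has_sum T) UNIV"
  proof -
    define S2 where "S2 = Sigma (UNIV :: nat set) (\<lambda>n. {..n})"
    define g2 where "g2 = (\<lambda>x::nat \<times> nat. (snd x, fst x - snd x))"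
    have bij2: "bij_betw g2 S2 UNIV"
      by (rule bij_betwI[where g = "\<lambda>y. (fst y + snd y, fst y)"]) (auto simp: S2_def g2_def)
    have "((\<lambda>x. (\<lambda>pq. Bq (fst pq) (snd pq)) (g2 x)) has_sum T) S2"
      using has_sum_reindex_bij_betw[OF bij2, of "\<lambda>pq. Bq (fst pq) (snd pq)" T] LHS1 by simp
    then have A: "((\<lambda>n. \<Sum>p\<in>{..n}. (\<lambda>pq. Bq (fst pq) (snd pq)) (g2 (n, p))) has_sum T) UNIV"
      unfolding S2_def by (rule has_sum_Sigma') (rule has_sum_finite, simp)
    have B: "(\<Sum>p\<in>{..n}. (\<lambda>pq. Bq (fst pq) (snd pq)) (g2 (n, p))) = h23 n" for n
    proof -
      have "(\<Sum>p\<in>{..n}. (\<lambda>pq. Bq (fst pq) (snd pq)) (g2 (n, p)))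
          = (\<Sum>p\<le>n. (u^n * (pochhammer (1/2) n * rGamma (lam + 1 + of_nat n))) *
               (rGamma (1 - mu + of_nat p) * rGamma (1 + mu + of_nat (n - p)) / (fact p * fact (n - p))))"
        by (rule sum.cong[OF refl]) (auto simp: g2_def Bq_def)
      also have "\<dots> = (u^n * (pochhammer (1/2) n * rGamma (lam + 1 + of_nat n))) *
          (4^n * pochhammer (1/2) n * rGamma (1 - mu + of_nat n) * rGamma (1 + mu + of_nat n) / fact n)"
        unfolding sum_distrib_left[symmetric] VAND_r ..
      also have "\<dots> = h23 n"
      proof -
        have "(- k\<^sup>2) ^ n = 4^n * u^n" unfolding u_def by (simp add: power_mult_distrib[symmetric])
        then show ?thesis unfolding h23_def by (simp add: field_simps add_ac)
      qed
      finally show ?thesis .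
    qed
    show ?thesis using A unfolding B .
  qed
  have hyp: "hyperpFq_reg [1/2, 1/2] [lam + 1, 1 - mu, mu + 1] (- k\<^sup>2) = suminf h23"
  proof -
    have "h23 = (\<lambda>n. (\<Prod>a\<leftarrow>[1/2, 1/2]. pochhammer a n) * (\<Prod>b\<leftarrow>[lam + 1, 1 - mu, mu + 1]. rGamma (b + of_nat n))
            * (- k\<^sup>2) ^ n / of_nat (fact n))"
      by (rule ext) (simp add: h23_def)
    then show ?thesis by (simp add: hyperpFq_reg_def)
  qed
  have coefeq: "(-1) ^ (2*L) * k ^ (4*L) * 2 powr (of_nat (2*L) + 2*lam + 1)
           * (of_nat (2*L) + lam) * Gamma (of_nat L + 1/2) * Gamma (lam + 1/2)
           * (pochhammer (lam + 1/2) (2*L))\<^sup>2 * (Gamma (of_nat (2*L) + lam + 1))\<^sup>2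
           * Gamma (of_nat (2*L) + 2*lam)
           / (of_real pi * Gamma (of_nat L + 1) * (Gamma (of_nat (4*L) + 2*lam + 1))\<^sup>2) = C L" for L
  proof -
    have "(-1) ^ (2*L) * k ^ (4*L) * 2 powr (of_nat (2*L) + 2*lam + 1)
           * (of_nat (2*L) + lam) * Gamma (of_nat L + 1/2) * Gamma (lam + 1/2)
           * (pochhammer (lam + 1/2) (2*L))\<^sup>2 * (Gamma (of_nat (2*L) + lam + 1))\<^sup>2
           * Gamma (of_nat (2*L) + 2*lam)
           / (of_real pi * Gamma (of_nat L + 1) * (Gamma (of_nat (4*L) + 2*lam + 1))\<^sup>2)
        = (-1) ^ (2*L) * k ^ (4*L) * (2 powr (of_nat (2*L) + 2*lam + 1)
           * (of_nat (2*L) + lam) * Gamma (of_nat L + 1/2) * Gamma (lam + 1/2)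
           * (pochhammer (lam + 1/2) (2*L))\<^sup>2 * (Gamma (of_nat (2*L) + lam + 1))\<^sup>2
           * Gamma (of_nat (2*L) + 2*lam)
           / (of_real pi * Gamma (of_nat L + 1) * (Gamma (of_nat (4*L) + 2*lam + 1))\<^sup>2))"
      by (simp only: mult.assoc times_divide_eq_right)
    also have "\<dots> = C L" unfolding coef_core[OF lam2] C_def by (simp add: power_mult)
    finally show ?thesis .
  qed
  have "(\<lambda>L. C L * (F1 L * F2 L)) sums T" using RHS by (rule has_sum_imp_sums)
  moreover have "suminf h23 = T" using has_sum_imp_sums[OF LHS2] by (simp add: sums_iff)
  ultimately show ?thesis unfolding hyp coefeq F1_def F2_def by (simp add: mult.assoc)
qed

end
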